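(* For every $n\ge4$, the word formed by the first $F_n$ letters of $\mathcal S$ equals the word formed by the letters of $\mathcal S$ in positions $F_n+1,\dots,2F_n$.
   Context: Fibonacci numbers: $F_1=F_2=1$, $F_{n+1}=F_n+F_{n-1}$ for $n\ge2$. Golden string: define finite words over $\{A,B\}$ by $S_1=B$, $S_2=BA$, $S_n=S_{n-1}:S_{n-2}$ for $n\ge3$, where $:$ denotes concatenation; each $S_n$ is a prefix of $S_{n+1}$, and $\mathcal S$ is the infinite word having every $S_n$ as a prefix ($\mathcal S=BABBABABBABB\ldots$). Letters of $\mathcal S$ are indexed starting at $1$. *)

theory Defs
  imports "HOL-Number_Theory.Fib"
begin

datatype letter = A | B

text \<open>Finite golden words: S 1 = B, S 2 = BA, S n = S (n-1) @ S (n-2) for n >= 3.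
  S 0 is not used (set to the empty word).\<close>
fun S :: "nat \<Rightarrow> letter list" where
  "S 0 = []"
| "S (Suc 0) = [B]"
| "S (Suc (Suc 0)) = [B, A]"
| "S (Suc (Suc (Suc n))) = S (Suc (Suc n)) @ S (Suc n)"

text \<open>The infinite golden string, as the unique infinite word having every S n
  (n >= 1) as a prefix. Internally 0-based: golden_word i is the letter at
  position i+1 of the golden string.\<close>
definition golden_word :: "nat \<Rightarrow> letter" where
  "golden_word = (THE w. \<forall>n\<ge>1. \<forall>i<length (S n). w i = S n ! i)"

definition golden_letter :: "nat \<Rightarrow> letter" where
  "golden_letter k = golden_word (k - 1)"

end

theory Submission
  imports Defs "HOL-Library.Sublist"
begin

lemma len_S: "n \<ge> 1 \<Longrightarrow> length (S n) = fib (n+1)"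
proof (induction n rule: S.induct)
  case (4 n)
  then show ?case by (cases n) (auto simp: numeral_eq_Suc)
qed auto

lemma S_step: "n \<ge> 1 \<Longrightarrow> prefix (S n) (S (Suc n))"
proof -
  assume "n \<ge> 1"
  then obtain m where "n = Suc m" by (cases n) auto
  then show ?thesis by (cases m) auto
qed

lemma S_mono: assumes "1 \<le> k" "k \<le> m" shows "prefix (S k) (S m)"
  using assms(2)
proof (induction m rule: dec_induct)
  case base then show ?case by simp
next
  case (step m) then show ?case using S_step[of m] assms(1) prefix_order.trans by auto
qed

lemma S_nth: "1 \<le> k \<Longrightarrow> k \<le> m \<Longrightarrow> i < length (S k) \<Longrightarrow> S k ! i = S m ! i"
proof -
  assume a: "1 \<le> k" "k \<le> m" "i < length (S k)"
  obtain zs where "S m = S k @ zs" using S_mono[OF a(1,2)] by (auto simp: prefix_def)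
  then show ?thesis using a(3) by (simp add: nth_append)
qed

lemma fib_pos: "0 < fib (Suc n)"
  by (induction n rule: fib.induct) auto

lemma fib_gt: "i < fib (i+2)"
proof (induction i)
  case 0 then show ?case by simp
next
  case (Suc i)
  have "fib (Suc i + 2) = fib (i+2) + fib (i+1)" by (simp add: numeral_eq_Suc)
  moreover have "fib (i+1) \<ge> 1" using fib_pos[of i] by simp
  ultimately show ?case using Suc by simp
qed

lemma golden_prop: "\<forall>n\<ge>1. \<forall>i<length (S n). golden_word i = S n ! i"
proof -
  let ?w = "\<lambda>i. S (i+1) ! i"
  have len: "i < length (S (i+1))" for i using len_S[of "i+1"] fib_gt[of i] by simp
  have P: "\<forall>n\<ge>1. \<forall>i<length (S n). ?w i = S n ! i"
  proof (intro allI impI)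
    fix n i assume n: "n \<ge> 1" and i: "i < length (S n)"
    show "?w i = S n ! i"
    proof (cases "i+1 \<le> n")
      case True then show ?thesis using S_nth[of "i+1" n i] len by simp
    next
      case False then show ?thesis using S_nth[of n "i+1" i] n i by simp
    qed
  qed
  have U: "w = ?w" if "\<forall>n\<ge>1. \<forall>i<length (S n). w i = S n ! i" for w
  proof
    fix i show "w i = ?w i" using that len[of i] by auto
  qed
  have "\<exists>!w. \<forall>n\<ge>1. \<forall>i<length (S n). w i = S n ! i"
  proof (rule ex1I[of _ "?w"])
    show "\<forall>n\<ge>1. \<forall>i<length (S n). ?w i = S n ! i" by (rule P)
  next
    fix w assume "\<forall>n\<ge>1. \<forall>i<length (S n). w i = S n ! i"
    then show "w = ?w" by (rule U)
  qed
  then show ?thesis unfolding golden_word_def by (rule theI')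
qed

lemma map_golden: "1 \<le> m \<Longrightarrow> a + l \<le> length (S m) \<Longrightarrow>
  map golden_letter [a+1..<a+l+1] = take l (drop a (S m))"
proof (rule nth_equalityI)
  assume m: "1 \<le> m" and al: "a + l \<le> length (S m)"
  show "length (map golden_letter [a+1..<a+l+1]) = length (take l (drop a (S m)))"
    using al by (simp del: upt_Suc)
  fix i assume "i < length (map golden_letter [a+1..<a+l+1])"
  then have i: "i < l" by (simp del: upt_Suc)
  then show "map golden_letter [a+1..<a+l+1] ! i = take l (drop a (S m)) ! i"
    using golden_prop m al by (simp del: upt_Suc add: golden_letter_def nth_append)
qed

theorem proposition2p1:
  fixes n :: nat
  assumes "n \<ge> 4"
  shows "map golden_letter [1..<fib n + 1] = map golden_letter [fib n + 1..<2 * fib n + 1]"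
proof -
  define k where "k = n - 3"
  have k: "n = k + 3" "k \<ge> 1" using assms unfolding k_def by auto
  obtain j where j: "k = Suc j" using k by (cases k) auto
  have e5: "S (k+5) = S (k+2) @ S (k+1) @ S (k+2) @ S (k+3)"
    using j by (simp add: numeral_eq_Suc)
  have e2: "S (k+2) = S (k+1) @ S k" using j by (simp add: numeral_eq_Suc)
  have lk2: "length (S (k+2)) = fib n" using len_S[of "k+2"] k by (simp add: numeral_eq_Suc)
  have lk1: "length (S (k+1)) = fib (k+2)" using len_S[of "k+1"] by simp
  have lk: "length (S k) = fib (k+1)" using len_S[of k] k by simp
  have fn: "fib n = fib (k+2) + fib (k+1)" using k by (simp add: numeral_eq_Suc)
  have pk: "take (length (S k)) (S (k+1)) = S k"
  proof -
    obtain zs where "S (k+1) = S k @ zs" using S_mono[of k "k+1"] k by (auto simp: prefix_def)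
    then show ?thesis by simp
  qed
  have L5: "length (S (k+5)) \<ge> 2 * fib n" using e5 lk2 by simp
  have "map golden_letter [1..<fib n + 1] = take (fib n) (drop 0 (S (k+5)))"
    using map_golden[of "k+5" 0 "fib n"] L5 by simp
  also have "\<dots> = S (k+2)" using e5 lk2 by simp
  also have "\<dots> = take (fib n) (drop (fib n) (S (k+5)))"
    using e5 lk2 e2 lk1 lk fn pk by simp
  also have "\<dots> = map golden_letter [fib n + 1..<2 * fib n + 1]"
    using map_golden[of "k+5" "fib n" "fib n"] L5 by (simp add: mult_2)
  finally show ?thesis .
qed

end
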